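(* Let $(X_n)_{n\ge0}$ be a Bienaym\'e--Galton--Watson branching process with $X_0=1$ and offspring distribution $\mathrm{Bin}(n_0,1/n_0)$, $n_0\ge2$, and let $Y_n=\sum_{k=0}^nX_k$. Then: (a) there exist $c_0>0$ and $p_0>0$ such that $P(Y_n>c_0n^2)\ge p_0/n$ for all $n\ge1$; (b) with these constants, if $\eta_n$ has distribution $\mathrm{Bin}(n,p_0/n)$, then $Y_n[n]$ stochastically dominates $c_0n^2\eta_n$.
   Context: For a random variable $\xi$ and integer $n\ge1$, $\xi[n]$ denotes a random variable distributed as $\sum_{i=1}^n\xi_i$ where $\xi_1,\dots,\xi_n$ are i.i.d. copies of $\xi$. A random variable $U$ stochastically dominates $W$ if $P(U>s)\ge P(W>s)$ for all $s$. *)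

theory Defs
  imports "HOL-Probability.Probability"
begin

fun iid_sum :: "nat pmf \<Rightarrow> nat \<Rightarrow> nat pmf" where
  "iid_sum p 0 = return_pmf 0"
| "iid_sum p (Suc k) = bind_pmf p (\<lambda>a. map_pmf (\<lambda>b. a + b) (iid_sum p k))"

text \<open>Joint law of (X_n, Y_n) for a Galton--Watson process with offspring law xi,
  X_0 = 1, Y_n = X_0 + ... + X_n.  Given X_n = x, X_{n+1} is a sum of x i.i.d. copies of xi.\<close>
fun gw_XY :: "nat pmf \<Rightarrow> nat \<Rightarrow> (nat \<times> nat) pmf" where
  "gw_XY xi 0 = return_pmf (1, 1)"
| "gw_XY xi (Suc n) =
     bind_pmf (gw_XY xi n) (\<lambda>(x, y). map_pmf (\<lambda>x'. (x', y + x')) (iid_sum xi x))"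

definition gw_total :: "nat pmf \<Rightarrow> nat \<Rightarrow> nat pmf" where
  "gw_total xi n = map_pmf snd (gw_XY xi n)"

end

theory Submission
  imports Defs
begin


abbreviation E :: "'a pmf \<Rightarrow> ('a \<Rightarrow> real) \<Rightarrow> real" where
  "E p g \<equiv> measure_pmf.expectation p g"

lemma E_bind:
  fixes g :: "'b \<Rightarrow> real"
  assumes fp: "finite (set_pmf p)" and ff: "\<And>x. x \<in> set_pmf p \<Longrightarrow> finite (set_pmf (f x))"
  shows "E (bind_pmf p f) g = E p (\<lambda>x. E (f x) g)"
proof -
  define S where "S = set_pmf (bind_pmf p f)"
  have fS: "finite S" unfolding S_def using fp ff by auto
  have sub: "x \<in> set_pmf p \<Longrightarrow> set_pmf (f x) \<subseteq> S" for x unfolding S_def by auto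
  have "E (bind_pmf p f) g = (\<Sum>y\<in>S. g y * pmf (bind_pmf p f) y)"
    by (rule integral_measure_pmf_real[OF fS]) (auto simp: S_def)
  also have "\<dots> = (\<Sum>y\<in>S. g y * (\<Sum>x\<in>set_pmf p. pmf (f x) y * pmf p x))"
    by (intro sum.cong refl arg_cong2[where f="(*)"]) (simp add: pmf_bind integral_measure_pmf_real[OF fp])
  also have "\<dots> = (\<Sum>x\<in>set_pmf p. (\<Sum>y\<in>S. g y * pmf (f x) y) * pmf p x)"
    by (simp add: sum_distrib_left sum_distrib_right sum.swap[of _ S] mult.assoc mult.left_commute)
  also have "\<dots> = (\<Sum>x\<in>set_pmf p. E (f x) g * pmf p x)"
    by (intro sum.cong refl arg_cong2[where f="(*)"] integral_measure_pmf_real[OF fS, symmetric])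
       (use sub in auto)
  also have "\<dots> = E p (\<lambda>x. E (f x) g)"
    by (rule integral_measure_pmf_real[OF fp, symmetric]) auto
  finally show ?thesis .
qed

lemma E_map: "E (map_pmf h p) g = E p (\<lambda>x. g (h x))"
  by simp

lemma fin_iid: "finite (set_pmf p) \<Longrightarrow> finite (set_pmf (iid_sum p k))"
  by (induction k) auto

lemma E_iid_Suc:
  fixes g :: "nat \<Rightarrow> real"
  assumes "finite (set_pmf p)"
  shows "E (iid_sum p (Suc k)) g = E p (\<lambda>a. E (iid_sum p k) (\<lambda>b. g (a + b)))"
  by (simp add: E_bind fin_iid assms del: integral_map_pmf) simp


lemmas intfin = integrable_measure_pmf_finite

lemma iid_moments:
  assumes fp: "finite (set_pmf p)"
  shows "E (iid_sum p k) real = real k * E p real \<and>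
         E (iid_sum p k) (\<lambda>z. real z ^ 2) = real k * E p (\<lambda>z. real z ^ 2) + real k * (real k - 1) * (E p real)^2"
proof (induction k)
  case 0
  then show ?case by simp
next
  case (Suc k)
  define m1 where "m1 = E p real"
  define m2 where "m2 = E p (\<lambda>z. real z ^ 2)"
  have fk: "finite (set_pmf (iid_sum p k))" using fin_iid[OF fp] .
  have h1: "E (iid_sum p k) real = real k * m1" and h2: "E (iid_sum p k) (\<lambda>z. real z ^ 2) = real k * m2 + real k * (real k - 1) * m1^2"
    using Suc m1_def m2_def by auto
  have a1: "E (iid_sum p k) (\<lambda>b. real (a + b)) = real a + real k * m1" for a
    using h1 by (simp add: intfin[OF fk])
  have a2: "E (iid_sum p k) (\<lambda>b. real (a + b) ^ 2) = real a ^ 2 + 2 * real a * (real k * m1) + (real k * m2 + real k * (real k - 1) * m1^2)" for a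
  proof -
    have "E (iid_sum p k) (\<lambda>b. real (a + b) ^ 2) = E (iid_sum p k) (\<lambda>b. real a ^ 2 + 2 * real a * real b + real b ^ 2)"
      by (simp add: power2_eq_square algebra_simps)
    also have "\<dots> = real a ^ 2 + 2 * real a * E (iid_sum p k) real + E (iid_sum p k) (\<lambda>z. real z ^ 2)"
      by (simp add: intfin[OF fk])
    finally show ?thesis using h1 h2 by simp
  qed
  have "E (iid_sum p (Suc k)) real = E p (\<lambda>a. real a + real k * m1)"
    by (simp only: E_iid_Suc[OF fp] a1)
  also have "\<dots> = real (Suc k) * m1" by (simp add: intfin[OF fp] m1_def algebra_simps)
  finally have r1: "E (iid_sum p (Suc k)) real = real (Suc k) * m1" .
  have "E (iid_sum p (Suc k)) (\<lambda>z. real z ^ 2) = E p (\<lambda>a. real a ^ 2 + 2 * real a * (real k * m1) + (real k * m2 + real k * (real k - 1) * m1^2))"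
    by (simp only: E_iid_Suc[OF fp] a2)
  also have "\<dots> = m2 + 2 * m1 * (real k * m1) + (real k * m2 + real k * (real k - 1) * m1^2)"
    by (simp add: intfin[OF fp] m1_def m2_def)
  also have "\<dots> = real (Suc k) * m2 + real (Suc k) * (real (Suc k) - 1) * m1^2"
    by (simp add: algebra_simps power2_eq_square)
  finally show ?case using r1 m1_def m2_def by simp
qed

lemma iid_third:
  assumes fp: "finite (set_pmf p)" and m1: "E p real = 1"
  shows "E (iid_sum p k) (\<lambda>z. real z ^ 3) \<le> real k ^ 3 + 3 * E p (\<lambda>z. real z ^ 2) * real k ^ 2 + E p (\<lambda>z. real z ^ 3) * real k"
proof (induction k)
  case 0
  then show ?case by simp
next
  case (Suc k)
  define m2 where "m2 = E p (\<lambda>z. real z ^ 2)"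
  define m3 where "m3 = E p (\<lambda>z. real z ^ 3)"
  have m2nn: "m2 \<ge> 0" unfolding m2_def by simp
  have fk: "finite (set_pmf (iid_sum p k))" using fin_iid[OF fp] .
  have h1: "E (iid_sum p k) real = real k" and h2: "E (iid_sum p k) (\<lambda>z. real z ^ 2) = real k * m2 + real k * (real k - 1)"
    using iid_moments[OF fp, of k] m1 m2_def by auto
  have h3: "E (iid_sum p k) (\<lambda>z. real z ^ 3) \<le> real k ^ 3 + 3 * m2 * real k ^ 2 + m3 * real k"
    using Suc m2_def m3_def by simp
  have a3: "E (iid_sum p k) (\<lambda>b. real (a + b) ^ 3) = real a ^ 3 + 3 * real a ^ 2 * real k + 3 * real a * (real k * m2 + real k * (real k - 1)) + E (iid_sum p k) (\<lambda>z. real z ^ 3)" for a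
  proof -
    have "E (iid_sum p k) (\<lambda>b. real (a + b) ^ 3) = E (iid_sum p k) (\<lambda>b. real a ^ 3 + 3 * real a ^ 2 * real b + 3 * real a * real b ^ 2 + real b ^ 3)"
      by (simp add: power3_eq_cube power2_eq_square algebra_simps)
    also have "\<dots> = real a ^ 3 + 3 * real a ^ 2 * E (iid_sum p k) real + 3 * real a * E (iid_sum p k) (\<lambda>z. real z ^ 2) + E (iid_sum p k) (\<lambda>z. real z ^ 3)"
      by (simp add: intfin[OF fk])
    finally show ?thesis using h1 h2 by simp
  qed
  have "E (iid_sum p (Suc k)) (\<lambda>z. real z ^ 3) = E p (\<lambda>a. real a ^ 3 + 3 * real a ^ 2 * real k + 3 * real a * (real k * m2 + real k * (real k - 1)) + E (iid_sum p k) (\<lambda>z. real z ^ 3))"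
    by (simp only: E_iid_Suc[OF fp] a3)
  also have "\<dots> = m3 + 3 * m2 * real k + 3 * (real k * m2 + real k * (real k - 1)) + E (iid_sum p k) (\<lambda>z. real z ^ 3)"
    using m1 by (simp add: intfin[OF fp] m2_def m3_def)
  also have "\<dots> \<le> real (Suc k) ^ 3 + 3 * m2 * real (Suc k) ^ 2 + m3 * real (Suc k)"
    using h3 m2nn by (simp add: power3_eq_cube power2_eq_square algebra_simps)
  finally show ?case using m2_def m3_def by simp
qed



definition bern :: "real \<Rightarrow> nat pmf" where
  "bern q = map_pmf (\<lambda>b. if b then 1 else 0) (bernoulli_pmf q)"

lemma binom_iid: "q \<in> {0..1} \<Longrightarrow> binomial_pmf k q = iid_sum (bern q) k"
proof (induction k)
  case 0 then show ?case by (simp add: binomial_pmf_0)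
next
  case (Suc k)
  have "binomial_pmf (Suc k) q = bernoulli_pmf q \<bind> (\<lambda>b. binomial_pmf k q \<bind> (\<lambda>k. return_pmf ((if b then 1 else 0) + k)))"
    using Suc.prems by (rule binomial_pmf_Suc)
  also have "\<dots> = bernoulli_pmf q \<bind> (\<lambda>b. map_pmf (\<lambda>k. (if b then 1 else 0) + k) (iid_sum (bern q) k))"
    using Suc by (simp add: map_pmf_def)
  also have "\<dots> = iid_sum (bern q) (Suc k)"
    by (simp add: bern_def bind_map_pmf)
  finally show ?case .
qed
lemma fin_bern: "finite (set_pmf (bern q))"
  unfolding bern_def by (rule finite_subset[of _ "{0,1}"]) auto

lemma grow:
  fixes f :: "nat \<Rightarrow> real"
  assumes "f 0 \<le> K" "\<And>n. f (Suc n) \<le> f n + K * (real n + 1) ^ k" "K \<ge> 0"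
  shows "f n \<le> K * (real n + 1) ^ Suc k"
proof (induction n)
  case 0 then show ?case using assms by simp
next
  case (Suc n)
  have "(real n + 1) ^ Suc k + (real n + 1) ^ k \<le> (real n + 2) ^ Suc k"
  proof -
    have "(real n + 1) ^ k \<le> (real n + 2) ^ k" by (intro power_mono) auto
    then have "(real n + 2) * (real n + 1) ^ k \<le> (real n + 2) * (real n + 2) ^ k" by (intro mult_left_mono) auto
    then show ?thesis by (simp add: algebra_simps)
  qed
  then have "K * ((real n + 1) ^ Suc k + (real n + 1) ^ k) \<le> K * (real n + 2) ^ Suc k"
    using assms(3) by (intro mult_left_mono) auto
  then show ?case using Suc assms(2)[of n] by (simp add: algebra_simps)
qed

lemma tail_pt:
  fixes y t u :: real
  assumes "y \<ge> 0" "0 < t" "t \<le> u"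
  shows "y ^ 2 \<le> t * y + u ^ 2 * indicator {z. z > t} y + y ^ 3 / u"
proof -
  have u: "u > 0" using assms by simp
  have c3: "y ^ 3 / u \<ge> 0" using assms u by simp
  have c2: "u ^ 2 * indicator {z. z > t} y \<ge> (0::real)" by simp
  have c1: "t * y \<ge> 0" using assms by simp
  show ?thesis
  proof (cases "y \<le> t")
    case True
    then have "y^2 \<le> t * y" using assms by (simp add: power2_eq_square mult_right_mono)
    then show ?thesis using c2 c3 by linarith
  next
    case False
    then have ind: "u ^ 2 * indicator {z. z > t} y = u ^ 2" by simp
    show ?thesis
    proof (cases "y \<le> u")
      case True
      then have "y^2 \<le> u^2" using assms by (intro power_mono) auto
      then show ?thesis using ind c1 c3 by linarith
    next
      case False
      then have "y^2 * u \<le> y^2 * y" using u by (intro mult_left_mono) auto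
      then have "y^2 \<le> y^3 / u" using u by (simp add: field_simps power2_eq_square power3_eq_cube)
      then show ?thesis using ind c1 c2 by linarith
    qed
  qed
qed



locale gw =
  fixes xi :: "nat pmf" and v m3 :: real
  assumes fin: "finite (set_pmf xi)"
    and m1: "E xi real = 1"
    and m2: "E xi (\<lambda>z. real z ^ 2) = 1 + v"
    and vlo: "1/2 \<le> v" and vhi: "v \<le> 1"
    and m3: "E xi (\<lambda>z. real z ^ 3) = m3"
begin

lemma m3nn: "m3 \<ge> 0" using m3[symmetric] by simp

lemma finS: "finite (set_pmf (iid_sum xi x))" using fin_iid[OF fin] .

lemma fin_gw: "finite (set_pmf (gw_XY xi n))"
  by (induction n) (auto simp: finS split: prod.splits)

lemma step: "E (gw_XY xi (Suc n)) h = E (gw_XY xi n) (\<lambda>z. E (iid_sum xi (fst z)) (\<lambda>x'. h (x', snd z + x')))"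
proof -
  have "E (gw_XY xi (Suc n)) h = E (gw_XY xi n) (\<lambda>z. E ((\<lambda>(x, y). map_pmf (\<lambda>x'. (x', y + x')) (iid_sum xi x)) z) h)"
    unfolding gw_XY.simps by (rule E_bind[OF fin_gw]) (auto simp: finS split: prod.splits)
  also have "\<dots> = E (gw_XY xi n) (\<lambda>z. E (iid_sum xi (fst z)) (\<lambda>x'. h (x', snd z + x')))"
    by (intro Bochner_Integration.integral_cong refl) (simp add: split_beta)
  finally show ?thesis .
qed

lemma c1: "E (iid_sum xi x) real = real x"
  using iid_moments[OF fin, of x] m1 by simp
lemma c2: "E (iid_sum xi x) (\<lambda>z. real z ^ 2) = real x ^ 2 + v * real x"
  using iid_moments[OF fin, of x] m1 m2 by (simp add: algebra_simps power2_eq_square)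
lemma c3: "E (iid_sum xi x) (\<lambda>z. real z ^ 3) \<le> real x ^ 3 + 3 * (1 + v) * real x ^ 2 + m3 * real x"
  using iid_third[OF fin m1, of x] m2 m3 by simp

lemmas I = intfin[OF finS] intfin[OF fin_gw]

lemma mX: "E (gw_XY xi n) (\<lambda>z. real (fst z)) = 1"
proof (induction n)
  case 0 then show ?case by simp
next
  case (Suc n) then show ?case by (subst step) (simp add: c1)
qed

lemma mY: "E (gw_XY xi n) (\<lambda>z. real (snd z)) = real n + 1"
proof (induction n)
  case 0 then show ?case by simp
next
  case (Suc n)
  have "E (gw_XY xi (Suc n)) (\<lambda>z. real (snd z)) = E (gw_XY xi n) (\<lambda>z. real (snd z) + real (fst z))"
    by (subst step) (simp add: I c1)
  then show ?case using Suc mX by (simp add: I)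
qed

lemma mX2: "E (gw_XY xi n) (\<lambda>z. real (fst z) ^ 2) = 1 + real n * v"
proof (induction n)
  case 0 then show ?case by simp
next
  case (Suc n)
  have "E (gw_XY xi (Suc n)) (\<lambda>z. real (fst z) ^ 2) = E (gw_XY xi n) (\<lambda>z. real (fst z) ^ 2 + v * real (fst z))"
    by (subst step) (simp add: I c2)
  then show ?case using Suc mX by (simp add: I algebra_simps)
qed


lemma i_XY: "E (iid_sum xi x) (\<lambda>x'. real x' * real (y + x')) = real y * real x + real x ^ 2 + v * real x"
proof -
  have "(\<lambda>x'. real x' * real (y + x')) = (\<lambda>x'. real y * real x' + real x' ^ 2)"
    by (auto simp: algebra_simps power2_eq_square)
  then show ?thesis by (simp add: I c1 c2)
qed

lemma i_Y2: "E (iid_sum xi x) (\<lambda>x'. real (y + x') ^ 2) = real y ^ 2 + 2 * real y * real x + real x ^ 2 + v * real x"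
proof -
  have "(\<lambda>x'. real (y + x') ^ 2) = (\<lambda>x'. real y ^ 2 + 2 * real y * real x' + real x' ^ 2)"
    by (auto simp: algebra_simps power2_eq_square)
  then show ?thesis by (simp add: I c1 c2)
qed

lemma i_X2Y: "E (iid_sum xi x) (\<lambda>x'. real x' ^ 2 * real (y + x')) = real y * (real x ^ 2 + v * real x) + E (iid_sum xi x) (\<lambda>z. real z ^ 3)"
proof -
  have "(\<lambda>x'. real x' ^ 2 * real (y + x')) = (\<lambda>x'. real y * real x' ^ 2 + real x' ^ 3)"
    by (auto simp: algebra_simps power2_eq_square power3_eq_cube)
  then show ?thesis by (simp add: I c1 c2)
qed

lemma i_XY2: "E (iid_sum xi x) (\<lambda>x'. real x' * real (y + x') ^ 2) = real y ^ 2 * real x + 2 * real y * (real x ^ 2 + v * real x) + E (iid_sum xi x) (\<lambda>z. real z ^ 3)"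
proof -
  have "(\<lambda>x'. real x' * real (y + x') ^ 2) = (\<lambda>x'. real y ^ 2 * real x' + 2 * real y * real x' ^ 2 + real x' ^ 3)"
    by (auto simp: algebra_simps power2_eq_square power3_eq_cube)
  then show ?thesis by (simp add: I c1 c2)
qed

lemma i_Y3: "E (iid_sum xi x) (\<lambda>x'. real (y + x') ^ 3) = real y ^ 3 + 3 * real y ^ 2 * real x + 3 * real y * (real x ^ 2 + v * real x) + E (iid_sum xi x) (\<lambda>z. real z ^ 3)"
proof -
  have "(\<lambda>x'. real (y + x') ^ 3) = (\<lambda>x'. real y ^ 3 + 3 * real y ^ 2 * real x' + 3 * real y * real x' ^ 2 + real x' ^ 3)"
    by (auto simp: algebra_simps power2_eq_square power3_eq_cube)
  then show ?thesis by (simp add: I c1 c2)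
qed

lemma mXY: "E (gw_XY xi n) (\<lambda>z. real (fst z) * real (snd z)) = 1 + real n + v * real n * (real n + 1) / 2"
proof (induction n)
  case 0 then show ?case by simp
next
  case (Suc n)
  have "E (gw_XY xi (Suc n)) (\<lambda>z. real (fst z) * real (snd z)) =
     E (gw_XY xi n) (\<lambda>z. real (snd z) * real (fst z) + real (fst z) ^ 2 + v * real (fst z))"
    by (subst step) (simp only: fst_conv snd_conv i_XY)
  also have "\<dots> = (1 + real n + v * real n * (real n + 1) / 2) + (1 + real n * v) + v"
    using Suc mX mX2 by (simp add: I mult.commute)
  finally show ?case by (simp add: algebra_simps)
qed

lemma mXY_le: "E (gw_XY xi n) (\<lambda>z. real (fst z) * real (snd z)) \<le> (real n + 1) ^ 2"
proof -
  have h0: "v * (real n * (real n + 1)) \<le> 1 * (real n * (real n + 1))"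
    by (rule mult_right_mono) (use vhi in auto)
  then have h: "v * real n * (real n + 1) \<le> real n * (real n + 1)" by (simp add: mult.assoc)
  have nn: "0 \<le> real n * (real n + 1)" by simp
  have sq: "(real n + 1) ^ 2 = real n * (real n + 1) + real n + 1" by (simp add: power2_eq_square algebra_simps)
  show ?thesis unfolding mXY sq using h nn by linarith
qed

lemma mY2: "E (gw_XY xi n) (\<lambda>z. real (snd z) ^ 2) \<ge> v * real n ^ 3 / 6"
proof (induction n)
  case 0 then show ?case by simp
next
  case (Suc n)
  have "E (gw_XY xi (Suc n)) (\<lambda>z. real (snd z) ^ 2) =
     E (gw_XY xi n) (\<lambda>z. real (snd z) ^ 2 + 2 * real (snd z) * real (fst z) + real (fst z) ^ 2 + v * real (fst z))"
    by (subst step) (simp only: fst_conv snd_conv i_Y2)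
  also have "\<dots> = E (gw_XY xi n) (\<lambda>z. real (snd z) ^ 2 + 2 * (real (fst z) * real (snd z)) + real (fst z) ^ 2 + v * real (fst z))"
    by (simp add: algebra_simps)
  also have "\<dots> = E (gw_XY xi n) (\<lambda>z. real (snd z) ^ 2) + 2 * (1 + real n + v * real n * (real n + 1) / 2) + (1 + real n * v) + v"
    using mX mX2 mXY by (simp add: I)
  finally have eq: "E (gw_XY xi (Suc n)) (\<lambda>z. real (snd z) ^ 2) = E (gw_XY xi n) (\<lambda>z. real (snd z) ^ 2) + 2 * (1 + real n + v * real n * (real n + 1) / 2) + (1 + real n * v) + v" .
  have v0: "v \<ge> 0" using vlo by simp
  have vn: "v * real n \<ge> 0" using v0 by simp
  have vnn: "v * real n * real n \<ge> 0" using vn by simp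
  have "v * real (Suc n) ^ 3 / 6 = v * real n ^ 3 / 6 + (v * real n * real n / 2 + v * real n / 2 + v / 6)"
    by (simp add: power3_eq_cube algebra_simps add_divide_distrib)
  also have "\<dots> \<le> E (gw_XY xi n) (\<lambda>z. real (snd z) ^ 2) + 2 * (1 + real n + v * real n * (real n + 1) / 2) + (1 + real n * v) + v"
  proof -
    have e1: "v * real n * (real n + 1) = v * real n * real n + v * real n" by (simp add: algebra_simps)
    have e2: "real n * v = v * real n" by simp
    have "0 \<le> real n" by simp
    have lin: "A/6 \<le> Ey \<Longrightarrow> 0 \<le> B \<Longrightarrow> 0 \<le> Cn \<Longrightarrow> 0 \<le> w \<Longrightarrow> 0 \<le> N \<Longrightarrow>
       A/6 + (B/2 + Cn/2 + w/6) \<le> Ey + 2*(1 + N + (B + Cn)/2) + (1 + Cn) + w" for A Ey B Cn w N :: real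
      by (simp add: field_simps)
    show ?thesis unfolding e1 e2 using lin[OF Suc vnn vn v0 \<open>0 \<le> real n\<close>] by simp
  qed
  finally show ?case using eq by simp
qed

definition "C0 = 6 + m3"

lemma mX3_step: "E (gw_XY xi (Suc n)) (\<lambda>z. real (fst z) ^ 3) \<le> E (gw_XY xi n) (\<lambda>z. real (fst z) ^ 3) + C0 * (real n + 1) ^ 1"
proof -
  have "E (gw_XY xi (Suc n)) (\<lambda>z. real (fst z) ^ 3) = E (gw_XY xi n) (\<lambda>z. E (iid_sum xi (fst z)) (\<lambda>x'. real x' ^ 3))"
    by (subst step) (simp only: fst_conv snd_conv)
  also have "\<dots> \<le> E (gw_XY xi n) (\<lambda>z. real (fst z) ^ 3 + 3 * (1 + v) * real (fst z) ^ 2 + m3 * real (fst z))"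
    by (intro integral_mono I c3)
  also have "\<dots> = E (gw_XY xi n) (\<lambda>z. real (fst z) ^ 3) + 3 * (1 + v) * (1 + real n * v) + m3"
    using mX mX2 by (simp add: I)
  also have "\<dots> \<le> E (gw_XY xi n) (\<lambda>z. real (fst z) ^ 3) + C0 * (real n + 1) ^ 1"
  proof -
    have a: "3 * (1 + v) * (1 + real n * v) \<le> 6 * (real n + 1)"
    proof -
      have "(1 + real n * v) \<le> real n + 1" using vhi by (simp add: mult_left_le)
      moreover have "3 * (1 + v) \<le> 6" using vhi by simp
      moreover have "0 \<le> 1 + real n * v" using vlo by simp
      ultimately show ?thesis by (intro mult_mono) auto
    qed
    have "m3 * 1 \<le> m3 * (real n + 1)" using m3nn by (intro mult_left_mono) auto
    then have b: "m3 \<le> m3 * (real n + 1)" by simp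
    show ?thesis using a b by (simp add: C0_def algebra_simps)
  qed
  finally show ?thesis .
qed

lemma mX3: "E (gw_XY xi n) (\<lambda>z. real (fst z) ^ 3) \<le> C0 * (real n + 1) ^ 2"
proof -
  have "E (gw_XY xi n) (\<lambda>z. real (fst z) ^ 3) \<le> C0 * (real n + 1) ^ Suc 1"
    by (rule grow[where f="\<lambda>n. E (gw_XY xi n) (\<lambda>z. real (fst z) ^ 3)"])
       (use m3nn mX3_step in \<open>auto simp: C0_def\<close>)
  then show ?thesis by (simp add: numeral_2_eq_2)
qed


definition "D0 = C0 + 6 + m3"
definition "K2 = 1 + D0"
definition "K3 = 2 * K2 + 2 + D0"
definition "K4 = 3 * K3 + 3 * K2 + 3 + D0"

lemma C0nn: "C0 \<ge> 0" using m3nn by (simp add: C0_def)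
lemma D0nn: "D0 \<ge> 0" using m3nn C0nn by (simp add: D0_def)
lemma K2nn: "K2 \<ge> 1" using D0nn by (simp add: K2_def)
lemma K3nn: "K3 \<ge> 1" using D0nn K2nn by (simp add: K3_def)
lemma K4nn: "K4 \<ge> 1" using D0nn K2nn K3nn by (simp add: K4_def)

lemma pw: "a \<le> b \<Longrightarrow> (real n + 1) ^ a \<le> (real n + 1) ^ b"
  by (rule power_increasing) auto

lemma pwK: "K \<ge> 0 \<Longrightarrow> a \<le> b \<Longrightarrow> K * (real n + 1) ^ a \<le> K * (real n + 1) ^ b"
  by (intro mult_left_mono pw) auto

lemma va: "0 \<le> p \<Longrightarrow> v * p \<le> p"
  using mult_right_mono[OF vhi, of p] by simp

lemma a3: "3 * (1 + v) * (1 + real n * v) \<le> 6 * (real n + 1)"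
proof -
  have "(1 + real n * v) \<le> real n + 1" using vhi by (simp add: mult_left_le)
  moreover have "3 * (1 + v) \<le> 6" using vhi by simp
  moreover have "0 \<le> 1 + real n * v" using vlo by simp
  ultimately show ?thesis by (intro mult_mono) auto
qed

abbreviation "tb z \<equiv> real (fst z) ^ 3 + 3 * (1 + v) * real (fst z) ^ 2 + m3 * real (fst z)"

lemma tb_le: "E (gw_XY xi n) tb \<le> D0 * (real n + 1) ^ 2"
proof -
  have "E (gw_XY xi n) tb = E (gw_XY xi n) (\<lambda>z. real (fst z) ^ 3) + 3 * (1 + v) * (1 + real n * v) + m3"
    using mX mX2 by (simp add: I)
  also have "\<dots> \<le> C0 * (real n + 1) ^ 2 + 6 * (real n + 1) ^ 2 + m3 * (real n + 1) ^ 2"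
  proof -
    have "6 * (real n + 1) ^ 1 \<le> 6 * (real n + 1) ^ 2" by (rule pwK) auto
    moreover have "m3 * (real n + 1) ^ 0 \<le> m3 * (real n + 1) ^ 2" by (rule pwK) (use m3nn in auto)
    ultimately show ?thesis using mX3[of n] a3[of n] by simp
  qed
  also have "\<dots> = D0 * (real n + 1) ^ 2" by (simp add: D0_def algebra_simps)
  finally show ?thesis .
qed

lemma mX2Y: "E (gw_XY xi n) (\<lambda>z. real (fst z) ^ 2 * real (snd z)) \<le> K2 * (real n + 1) ^ 3"
proof -
  have st: "E (gw_XY xi (Suc n)) (\<lambda>z. real (fst z) ^ 2 * real (snd z)) \<le> E (gw_XY xi n) (\<lambda>z. real (fst z) ^ 2 * real (snd z)) + K2 * (real n + 1) ^ 2" for n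
  proof -
    have "E (gw_XY xi (Suc n)) (\<lambda>z. real (fst z) ^ 2 * real (snd z)) =
       E (gw_XY xi n) (\<lambda>z. real (snd z) * (real (fst z) ^ 2 + v * real (fst z)) + E (iid_sum xi (fst z)) (\<lambda>z. real z ^ 3))"
      by (subst step) (simp only: fst_conv snd_conv i_X2Y)
    also have "\<dots> \<le> E (gw_XY xi n) (\<lambda>z. real (fst z) ^ 2 * real (snd z) + real (fst z) * real (snd z) + tb z)"
    proof (intro integral_mono I)
      fix z :: "nat \<times> nat"
      have "v * (real (fst z) * real (snd z)) \<le> real (fst z) * real (snd z)" by (rule va) simp
      then show "real (snd z) * (real (fst z) ^ 2 + v * real (fst z)) + E (iid_sum xi (fst z)) (\<lambda>z. real z ^ 3)
         \<le> real (fst z) ^ 2 * real (snd z) + real (fst z) * real (snd z) + tb z"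
        using c3[of "fst z"] by (simp add: algebra_simps)
    qed
    also have "\<dots> = E (gw_XY xi n) (\<lambda>z. real (fst z) ^ 2 * real (snd z)) + E (gw_XY xi n) (\<lambda>z. real (fst z) * real (snd z)) + E (gw_XY xi n) tb"
      by (simp add: I)
    also have "\<dots> \<le> E (gw_XY xi n) (\<lambda>z. real (fst z) ^ 2 * real (snd z)) + K2 * (real n + 1) ^ 2"
      using mXY_le[of n] tb_le[of n] by (simp add: K2_def algebra_simps)
    finally show ?thesis .
  qed
  have "E (gw_XY xi n) (\<lambda>z. real (fst z) ^ 2 * real (snd z)) \<le> K2 * (real n + 1) ^ Suc 2"
    by (rule grow[where f="\<lambda>n. E (gw_XY xi n) (\<lambda>z. real (fst z) ^ 2 * real (snd z))"])
       (use K2nn st in auto)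
  then show ?thesis by (simp add: numeral_3_eq_3)
qed

lemma mXY2: "E (gw_XY xi n) (\<lambda>z. real (fst z) * real (snd z) ^ 2) \<le> K3 * (real n + 1) ^ 4"
proof -
  have st: "E (gw_XY xi (Suc n)) (\<lambda>z. real (fst z) * real (snd z) ^ 2) \<le> E (gw_XY xi n) (\<lambda>z. real (fst z) * real (snd z) ^ 2) + K3 * (real n + 1) ^ 3" for n
  proof -
    have "E (gw_XY xi (Suc n)) (\<lambda>z. real (fst z) * real (snd z) ^ 2) =
       E (gw_XY xi n) (\<lambda>z. real (snd z) ^ 2 * real (fst z) + 2 * real (snd z) * (real (fst z) ^ 2 + v * real (fst z)) + E (iid_sum xi (fst z)) (\<lambda>z. real z ^ 3))"
      by (subst step) (simp only: fst_conv snd_conv i_XY2)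
    also have "\<dots> \<le> E (gw_XY xi n) (\<lambda>z. real (fst z) * real (snd z) ^ 2 + 2 * (real (fst z) ^ 2 * real (snd z)) + 2 * (real (fst z) * real (snd z)) + tb z)"
    proof (intro integral_mono I)
      fix z :: "nat \<times> nat"
      have "v * (real (fst z) * real (snd z)) \<le> real (fst z) * real (snd z)" by (rule va) simp
      then show "real (snd z) ^ 2 * real (fst z) + 2 * real (snd z) * (real (fst z) ^ 2 + v * real (fst z)) + E (iid_sum xi (fst z)) (\<lambda>z. real z ^ 3)
         \<le> real (fst z) * real (snd z) ^ 2 + 2 * (real (fst z) ^ 2 * real (snd z)) + 2 * (real (fst z) * real (snd z)) + tb z"
        using c3[of "fst z"] by (simp add: algebra_simps)
    qed
    also have "\<dots> = E (gw_XY xi n) (\<lambda>z. real (fst z) * real (snd z) ^ 2) + 2 * E (gw_XY xi n) (\<lambda>z. real (fst z) ^ 2 * real (snd z)) + 2 * E (gw_XY xi n) (\<lambda>z. real (fst z) * real (snd z)) + E (gw_XY xi n) tb"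
      by (simp add: I)
    also have "\<dots> \<le> E (gw_XY xi n) (\<lambda>z. real (fst z) * real (snd z) ^ 2) + K3 * (real n + 1) ^ 3"
    proof -
      have "2 * (real n + 1) ^ 2 \<le> 2 * (real n + 1) ^ 3" by (rule pwK) auto
      moreover have "D0 * (real n + 1) ^ 2 \<le> D0 * (real n + 1) ^ 3" by (rule pwK) (use D0nn in auto)
      ultimately show ?thesis using mXY_le[of n] tb_le[of n] mX2Y[of n] by (simp add: K3_def algebra_simps)
    qed
    finally show ?thesis .
  qed
  have "E (gw_XY xi n) (\<lambda>z. real (fst z) * real (snd z) ^ 2) \<le> K3 * (real n + 1) ^ Suc 3"
    by (rule grow[where f="\<lambda>n. E (gw_XY xi n) (\<lambda>z. real (fst z) * real (snd z) ^ 2)"])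
       (use K3nn st in auto)
  then show ?thesis by simp
qed

lemma mY3: "E (gw_XY xi n) (\<lambda>z. real (snd z) ^ 3) \<le> K4 * (real n + 1) ^ 5"
proof -
  have st: "E (gw_XY xi (Suc n)) (\<lambda>z. real (snd z) ^ 3) \<le> E (gw_XY xi n) (\<lambda>z. real (snd z) ^ 3) + K4 * (real n + 1) ^ 4" for n
  proof -
    have "E (gw_XY xi (Suc n)) (\<lambda>z. real (snd z) ^ 3) =
       E (gw_XY xi n) (\<lambda>z. real (snd z) ^ 3 + 3 * real (snd z) ^ 2 * real (fst z) + 3 * real (snd z) * (real (fst z) ^ 2 + v * real (fst z)) + E (iid_sum xi (fst z)) (\<lambda>z. real z ^ 3))"
      by (subst step) (simp only: fst_conv snd_conv i_Y3)
    also have "\<dots> \<le> E (gw_XY xi n) (\<lambda>z. real (snd z) ^ 3 + 3 * (real (fst z) * real (snd z) ^ 2) + 3 * (real (fst z) ^ 2 * real (snd z)) + 3 * (real (fst z) * real (snd z)) + tb z)"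
    proof (intro integral_mono I)
      fix z :: "nat \<times> nat"
      have "v * (real (fst z) * real (snd z)) \<le> real (fst z) * real (snd z)" by (rule va) simp
      then show "real (snd z) ^ 3 + 3 * real (snd z) ^ 2 * real (fst z) + 3 * real (snd z) * (real (fst z) ^ 2 + v * real (fst z)) + E (iid_sum xi (fst z)) (\<lambda>z. real z ^ 3)
         \<le> real (snd z) ^ 3 + 3 * (real (fst z) * real (snd z) ^ 2) + 3 * (real (fst z) ^ 2 * real (snd z)) + 3 * (real (fst z) * real (snd z)) + tb z"
        using c3[of "fst z"] by (simp add: algebra_simps)
    qed
    also have "\<dots> = E (gw_XY xi n) (\<lambda>z. real (snd z) ^ 3) + 3 * E (gw_XY xi n) (\<lambda>z. real (fst z) * real (snd z) ^ 2) + 3 * E (gw_XY xi n) (\<lambda>z. real (fst z) ^ 2 * real (snd z)) + 3 * E (gw_XY xi n) (\<lambda>z. real (fst z) * real (snd z)) + E (gw_XY xi n) tb"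
      by (simp add: I)
    also have "\<dots> \<le> E (gw_XY xi n) (\<lambda>z. real (snd z) ^ 3) + K4 * (real n + 1) ^ 4"
    proof -
      have "3 * (real n + 1) ^ 2 \<le> 3 * (real n + 1) ^ 4" by (rule pwK) auto
      moreover have "D0 * (real n + 1) ^ 2 \<le> D0 * (real n + 1) ^ 4" by (rule pwK) (use D0nn in auto)
      moreover have "K2 * (real n + 1) ^ 3 \<le> K2 * (real n + 1) ^ 4" by (rule pwK) (use K2nn in auto)
      ultimately show ?thesis using mXY_le[of n] tb_le[of n] mX2Y[of n] mXY2[of n] by (simp add: K4_def algebra_simps)
    qed
    finally show ?thesis .
  qed
  have "E (gw_XY xi n) (\<lambda>z. real (snd z) ^ 3) \<le> K4 * (real n + 1) ^ Suc 4"
    by (rule grow[where f="\<lambda>n. E (gw_XY xi n) (\<lambda>z. real (snd z) ^ 3)"])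
       (use K4nn st in auto)
  then show ?thesis by simp
qed


definition "LL = 1536 * K4"
definition "pp = 1 / (24 * LL ^ 2)"

lemma LL_ge: "LL \<ge> 1" using K4nn by (simp add: LL_def)
lemma pp_pos: "pp > 0" "pp \<le> 1"
proof -
  have "1 \<le> LL ^ 2" using LL_ge by (simp add: one_le_power)
  then have "1 \<le> 24 * LL ^ 2" by linarith
  then show "pp > 0" "pp \<le> 1" by (auto simp: pp_def divide_le_eq_1)
qed

lemma fin_tot: "finite (set_pmf (gw_total xi n))"
  unfolding gw_total_def using fin_gw by simp

lemma tail:
  assumes n: "n \<ge> 1"
  shows "measure_pmf.prob (gw_total xi n) {y. real y > (1/96) * real n ^ 2} \<ge> pp / real n"
proof -
  define Q where "Q = gw_total xi n"
  define N where "N = real n"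
  define t where "t = (1/96) * N ^ 2"
  define u where "u = LL * N ^ 2"
  define P where "P = measure_pmf.prob Q {y. real y > t}"
  have N1: "N \<ge> 1" using n by (simp add: N_def)
  have t0: "t > 0" using N1 by (simp add: t_def)
  have tu: "t \<le> u" using N1 LL_ge unfolding t_def u_def by (intro mult_right_mono) auto
  have u0: "u > 0" using t0 tu by simp
  have fQ: "finite (set_pmf Q)" using fin_tot Q_def by simp
  have EQ1: "E Q real = N + 1" using mY[of n] by (simp add: Q_def N_def gw_total_def)
  have EQ2: "E Q (\<lambda>y. real y ^ 2) \<ge> v * N ^ 3 / 6" using mY2[of n] by (simp add: Q_def N_def gw_total_def)
  have EQ3: "E Q (\<lambda>y. real y ^ 3) \<le> K4 * (N + 1) ^ 5" using mY3[of n] by (simp add: Q_def N_def gw_total_def)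
  have "(N + 1) ^ 5 \<le> (2 * N) ^ 5" using N1 by (intro power_mono) auto
  then have "K4 * (N + 1) ^ 5 \<le> K4 * (2 * N) ^ 5" using K4nn by (intro mult_left_mono) auto
  then have EQ3': "E Q (\<lambda>y. real y ^ 3) \<le> 32 * K4 * N ^ 5" using EQ3 by (simp add: power_mult_distrib)
  have "E Q (\<lambda>y. real y ^ 2) \<le> E Q (\<lambda>y. t * real y + u ^ 2 * indicator {z. z > t} (real y) + real y ^ 3 / u)"
    by (intro integral_mono intfin[OF fQ] tail_pt t0 tu) auto
  also have "\<dots> = t * E Q real + u ^ 2 * E Q (\<lambda>y. indicator {z. z > t} (real y)) + E Q (\<lambda>y. real y ^ 3) / u"
    by (simp add: intfin[OF fQ])
  also have "E Q (\<lambda>y. indicator {z. z > t} (real y)) = P"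
  proof -
    have "(\<lambda>y. indicator {z. z > t} (real y)) = (indicator {y. real y > t} :: nat \<Rightarrow> real)"
      by (auto simp: indicator_def)
    then show ?thesis by (simp add: P_def)
  qed
  finally have main0: "E Q (\<lambda>y. real y ^ 2) \<le> t * (N + 1) + u ^ 2 * P + E Q (\<lambda>y. real y ^ 3) / u"
    unfolding EQ1 .
  have main: "v * N ^ 3 / 6 \<le> t * (N + 1) + u ^ 2 * P + E Q (\<lambda>y. real y ^ 3) / u"
    by (rule order_trans[OF EQ2 main0])
  have b1: "N ^ 3 / 12 \<le> v * N ^ 3 / 6" using vlo N1 by (simp add: field_simps)
  have b2: "t * (N + 1) \<le> N ^ 3 / 48"
  proof -
    have "N ^ 2 * (N + 1) \<le> N ^ 2 * (2 * N)" using N1 by (intro mult_left_mono) auto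
    then show ?thesis by (simp add: t_def power2_eq_square power3_eq_cube field_simps)
  qed
  have b3: "E Q (\<lambda>y. real y ^ 3) / u \<le> N ^ 3 / 48"
  proof -
    have "E Q (\<lambda>y. real y ^ 3) / u \<le> 32 * K4 * N ^ 5 / u" using EQ3' u0 by (simp add: divide_right_mono)
    also have "\<dots> = N ^ 3 / 48" using K4nn N1 by (simp add: u_def LL_def field_simps power2_eq_square power3_eq_cube eval_nat_numeral)
    finally show ?thesis .
  qed
  have lin2: "a/12 \<le> b \<Longrightarrow> b \<le> x + U + y \<Longrightarrow> x \<le> a/48 \<Longrightarrow> y \<le> a/48 \<Longrightarrow> a/24 \<le> (U::real)" for a b x y U
    by linarith
  have "N ^ 3 / 24 \<le> u ^ 2 * P" by (rule lin2[OF b1 main b2 b3])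
  then have "N ^ 3 / 24 / u ^ 2 \<le> P" using u0 by (simp add: pos_divide_le_eq mult.commute)
  moreover have "N ^ 3 / 24 / u ^ 2 = pp / N" using N1 LL_ge by (simp add: u_def pp_def field_simps power2_eq_square power3_eq_cube eval_nat_numeral)
  ultimately show ?thesis by (simp add: P_def Q_def t_def N_def)
qed

end


lemma E_swap:
  fixes f :: "'a \<Rightarrow> 'b \<Rightarrow> real"
  assumes "finite (set_pmf p)" "finite (set_pmf q)"
  shows "E p (\<lambda>a. E q (\<lambda>b. f a b)) = E q (\<lambda>b. E p (\<lambda>a. f a b))"
proof -
  have "E p (\<lambda>a. E q (\<lambda>b. f a b)) = (\<Sum>a\<in>set_pmf p. (\<Sum>b\<in>set_pmf q. f a b * pmf q b) * pmf p a)"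
    by (subst integral_measure_pmf_real[OF assms(1)]) (auto intro!: sum.cong integral_measure_pmf_real[OF assms(2)])
  also have "\<dots> = (\<Sum>a\<in>set_pmf p. \<Sum>b\<in>set_pmf q. f a b * pmf q b * pmf p a)"
    by (simp add: sum_distrib_right)
  also have "\<dots> = (\<Sum>b\<in>set_pmf q. \<Sum>a\<in>set_pmf p. f a b * pmf q b * pmf p a)"
    by (rule sum.swap)
  also have "\<dots> = (\<Sum>b\<in>set_pmf q. (\<Sum>a\<in>set_pmf p. f a b * pmf p a) * pmf q b)"
    by (simp add: sum_distrib_right sum_distrib_left mult_ac)
  also have "\<dots> = E q (\<lambda>b. E p (\<lambda>a. f a b))"
    by (subst integral_measure_pmf_real[OF assms(2)]) (auto intro!: sum.cong integral_measure_pmf_real[OF assms(1), symmetric])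
  finally show ?thesis .
qed

lemma prE: "measure_pmf.prob R A = E R (indicator A)"
  by simp

lemma dom_iid:
  fixes P B :: "nat pmf" and T :: real
  assumes fP: "finite (set_pmf P)" and fB: "finite (set_pmf B)"
    and base: "\<And>s. measure_pmf.prob P {y. real y > s} \<ge> measure_pmf.prob B {k. T * real k > s}"
  shows "measure_pmf.prob (iid_sum P m) {y. real y > s} \<ge> measure_pmf.prob (iid_sum B m) {k. T * real k > s}"
proof (induction m arbitrary: s)
  case 0
  then show ?case by (simp add: indicator_def)
next
  case (Suc m)
  have fPm: "finite (set_pmf (iid_sum P m))" using fin_iid[OF fP] .
  have fBm: "finite (set_pmf (iid_sum B m))" using fin_iid[OF fB] .
  have "measure_pmf.prob (iid_sum B (Suc m)) {k. T * real k > s}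
      = E B (\<lambda>b. E (iid_sum B m) (\<lambda>k. indicator {k. T * real k > s} (b + k)))"
    unfolding prE by (rule E_iid_Suc[OF fB])
  also have "\<dots> = E B (\<lambda>b. E (iid_sum B m) (\<lambda>k. indicator {b. T * real b > s - T * real k} b))"
    by (intro Bochner_Integration.integral_cong refl) (auto simp: indicator_def algebra_simps)
  also have "\<dots> = E (iid_sum B m) (\<lambda>k. measure_pmf.prob B {b. T * real b > s - T * real k})"
    unfolding prE by (rule E_swap[OF fB fBm])
  also have "\<dots> \<le> E (iid_sum B m) (\<lambda>k. measure_pmf.prob P {a. real a > s - T * real k})"
    by (intro integral_mono intfin[OF fBm] base)
  also have "\<dots> = E (iid_sum B m) (\<lambda>k. E P (\<lambda>a. indicator {k. T * real k > s - real a} k))"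
  proof (intro Bochner_Integration.integral_cong refl)
    fix k
    show "measure_pmf.prob P {a. real a > s - T * real k} = E P (\<lambda>a. indicator {k. T * real k > s - real a} k)"
      by (simp only: prE) (rule Bochner_Integration.integral_cong[OF refl], auto simp: indicator_def)
  qed
  also have "\<dots> = E P (\<lambda>a. E (iid_sum B m) (\<lambda>k. indicator {k. T * real k > s - real a} k))"
    by (rule E_swap[OF fBm fP])
  also have "\<dots> \<le> E P (\<lambda>a. E (iid_sum P m) (\<lambda>y. indicator {y. real y > s - real a} y))"
    unfolding prE[symmetric] by (intro integral_mono intfin[OF fP] Suc)
  also have "\<dots> = E P (\<lambda>a. E (iid_sum P m) (\<lambda>y. indicator {y. real y > s} (a + y)))"
    by (intro Bochner_Integration.integral_cong refl) (auto simp: indicator_def algebra_simps)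
  also have "\<dots> = measure_pmf.prob (iid_sum P (Suc m)) {y. real y > s}"
    unfolding prE by (rule E_iid_Suc[OF fP, symmetric])
  finally show ?case .
qed

lemma E_bern: "0 \<le> q \<Longrightarrow> q \<le> 1 \<Longrightarrow> E (bern q) f = f 1 * q + f 0 * (1 - q)"
  unfolding bern_def by simp

lemma bern_moms: "0 \<le> q \<Longrightarrow> q \<le> 1 \<Longrightarrow> E (bern q) real = q \<and> E (bern q) (\<lambda>z. real z ^ 2) = q"
  by (simp add: E_bern)


lemma base_dom:
  fixes Q :: "nat pmf" and T r :: real
  assumes r: "0 \<le> r" "r \<le> 1" and T: "T \<ge> 0"
    and tailQ: "measure_pmf.prob Q {y. real y > T} \<ge> r"
  shows "measure_pmf.prob Q {y. real y > s} \<ge> measure_pmf.prob (bern r) {k. T * real k > s}"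
proof -
  have pb: "measure_pmf.prob (bern r) {k. T * real k > s} = indicator {k. T * real k > s} (1::nat) * r + indicator {k. T * real k > s} (0::nat) * (1 - r)"
    unfolding prE using r by (rule E_bern)
  show ?thesis
  proof (cases "s < 0")
    case True
    then have "{y. real y > s} = (UNIV :: nat set)" by auto
    then have "measure_pmf.prob Q {y. real y > s} = 1" by simp
    then show ?thesis using measure_pmf.prob_le_1 by simp
  next
    case False
    then have i0: "indicator {k. T * real k > s} (0::nat) = (0::real)" by (simp add: indicator_def)
    show ?thesis
    proof (cases "T > s")
      case True
      then have "measure_pmf.prob (bern r) {k. T * real k > s} = r" using pb i0 by (simp add: indicator_def)
      moreover have "measure_pmf.prob Q {y. real y > T} \<le> measure_pmf.prob Q {y. real y > s}"
        using True by (intro measure_pmf.finite_measure_mono) auto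
      ultimately show ?thesis using tailQ by simp
    next
      case False
      then have "measure_pmf.prob (bern r) {k. T * real k > s} = 0" using pb i0 by (simp add: indicator_def)
      then show ?thesis by simp
    qed
  qed
qed

theorem lemma2p3:
  fixes n0 :: nat
  assumes "n0 \<ge> 2"
  defines "xi \<equiv> binomial_pmf n0 (1 / real n0)"
  shows "\<exists>c0 p0 :: real. c0 > 0 \<and> p0 > 0 \<and>
    (\<forall>n::nat. n \<ge> 1 \<longrightarrow>
       measure_pmf.prob (gw_total xi n) {y. real y > c0 * real n ^ 2} \<ge> p0 / real n) \<and>
    (\<forall>n::nat. n \<ge> 1 \<longrightarrow> (\<forall>s::real.
       measure_pmf.prob (iid_sum (gw_total xi n) n) {y. real y > s}
       \<ge> measure_pmf.prob (binomial_pmf n (p0 / real n)) {k. c0 * real n ^ 2 * real k > s}))"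
proof -
  define q where "q = 1 / real n0"
  have n0r: "real n0 \<ge> 2" using assms(1) by simp
  have q0: "0 \<le> q" and q1: "q \<le> 1/2" using n0r by (auto simp: q_def field_simps)
  have nq: "real n0 * q = 1" using n0r by (simp add: q_def)
  have xi_eq: "xi = iid_sum (bern q) n0" unfolding xi_def q_def[symmetric]
    by (rule binom_iid) (use q0 q1 in auto)
  have fxi: "finite (set_pmf xi)" unfolding xi_eq by (rule fin_iid[OF fin_bern])
  have bm: "E (bern q) real = q" "E (bern q) (\<lambda>z. real z ^ 2) = q" using bern_moms[OF q0] q1 by auto
  have mm: "E xi real = real n0 * q \<and> E xi (\<lambda>z. real z ^ 2) = real n0 * q + real n0 * (real n0 - 1) * q ^ 2"
    unfolding xi_eq using iid_moments[OF fin_bern, of q n0] bm by simp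
  have m1: "E xi real = 1" using mm nq by simp
  have "real n0 * (real n0 - 1) * q ^ 2 = (real n0 * q) * (real n0 * q) - (real n0 * q) * q"
    by (simp add: algebra_simps power2_eq_square)
  then have m2: "E xi (\<lambda>z. real z ^ 2) = 1 + (1 - q)" using mm nq by simp
  interpret G: gw xi "1 - q" "E xi (\<lambda>z. real z ^ 3)"
    by unfold_locales (use fxi m1 m2 q0 q1 in auto)
  show ?thesis
  proof (rule exI[of _ "1/96"], rule exI[of _ G.pp], intro conjI allI impI)
    show "(0::real) < 1/96" by simp
    show "0 < G.pp" by (rule G.pp_pos(1))
    fix n :: nat assume n: "1 \<le> n"
    show "G.pp / real n \<le> measure_pmf.prob (gw_total xi n) {y. real y > 1/96 * real n ^ 2}"
      using G.tail[OF n] .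
  next
    fix n :: nat and s :: real assume n: "1 \<le> n"
    define r where "r = G.pp / real n"
    have r0: "0 \<le> r" using G.pp_pos(1) by (simp add: r_def)
    have r1: "r \<le> 1" using G.pp_pos(2) n by (simp add: r_def field_simps)
    have bi: "binomial_pmf n (G.pp / real n) = iid_sum (bern r) n"
      unfolding r_def[symmetric] by (rule binom_iid) (use r0 r1 in auto)
    have "measure_pmf.prob (iid_sum (bern r) n) {k. (1/96 * real n ^ 2) * real k > s}
        \<le> measure_pmf.prob (iid_sum (gw_total xi n) n) {y. real y > s}"
    proof (rule dom_iid[OF G.fin_tot fin_bern])
      fix s :: real
      show "measure_pmf.prob (bern r) {k. (1/96 * real n ^ 2) * real k > s} \<le> measure_pmf.prob (gw_total xi n) {y. real y > s}"
        by (rule base_dom[OF r0 r1]) (use G.tail[OF n] in \<open>auto simp: r_def\<close>)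
    qed
    then show "measure_pmf.prob (binomial_pmf n (G.pp / real n)) {k. 1/96 * real n ^ 2 * real k > s}
        \<le> measure_pmf.prob (iid_sum (gw_total xi n) n) {y. real y > s}"
      unfolding bi by simp
  qed
qed

end
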